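(* Let $\xi\in X^\ast(T)$ be a dominant integral weight and $V_{\mathbb{R}}^\xi:=\{z\in V_{\mathbb{R}}:\lambda(z)\ge\mathrm{val}_L(\gamma_\xi^{dom}(\lambda))\text{ for all }\lambda\in\Lambda\}$. Then $V_{\mathbb{R}}^\xi=\{z\in V_{\mathbb{R}}:(z+\eta_L+\xi_L)^{dom}\le\eta_L+\xi_L\}$.
   Context: $L$ is a finite extension of $\mathbb{Q}_p$, $K$ a complete extension field of $\mathbb{Q}_p$ containing $L$; $|\ |_L$ normalized absolute value of $L$, $\pi_L$ a prime element, $\mathrm{val}_L:K^\times\to\mathbb{R}$ with $\mathrm{val}_L(L^\times)=\mathbb{Z}$. $G$ is the $L$-points of an $L$-split connected reductive group, $T$ a maximal $L$-split torus, $P$ a Borel subgroup containing $T$, $\Phi^+$ the roots positive for $P$, $W=N(T)/T$ acting on $T$ and $\Lambda$ by conjugation, $U_0$ a maximal compact subgroup special for $T$, $\Lambda=T/(U_0\cap T)$, $\lambda:T\to\Lambda$ the projection, $T^{--}=\{t:|\alpha(t)|_L\ge1\ \forall\alpha\in\Phi^+\}$, $\Lambda^{--}=\lambda(T^{--})$. $V_{\mathbb{R}}=\mathrm{Hom}(\Lambda,\mathbb{R})\cong X^\ast(T)\otimes\mathbb{R}$ via $\chi\mapsto\mathrm{val}_L\circ\chi$; $\lambda\in\Lambda$ is viewed as a linear form on $V_{\mathbb{R}}$. Partial order: $z\le z'$ iff $z'-z\in\sum_{\alpha\in\Phi^+}\mathbb{R}_{\ge0}\mathrm{val}_L\circ\alpha$;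 $z^{dom}$ is the unique dominant point in the $W$-orbit of $z$. $\xi_L:=\mathrm{val}_L\circ\xi$, $\eta$ is half the sum of the positive roots in $V_{\mathbb{R}}$, $\eta_L:=[L:\mathbb{Q}_p]\eta$. $\gamma_\xi(w,\lambda(t)):=\big(\prod_{\alpha\in\Phi^+\setminus{}^{w^{-1}}\Phi^+}|\alpha(t)|_L\big)\pi_L^{\mathrm{val}_L(\xi({}^wt))-\mathrm{val}_L(\xi(t))}$, and $\gamma_\xi^{dom}(\lambda):=\gamma_\xi(w,\lambda)$ for any $w$ with ${}^w\lambda\in\Lambda^{--}$. *)

theory Defs
  imports "HOL-Analysis.Analysis"
begin

text \<open>Coordinates: X^*(T) and Lambda = X_*(T) are both identified with the integer
points of real^'n, with the pairing given by the dot product.  V_R = X^*(T) (x) R is real^'n;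
via chi |-> val_L o chi the character chi is the vector chi itself, and
lambda in Lambda acts on V_R by z |-> z \<bullet> lambda, so that val_L(chi(t)) = chi \<bullet> lambda(t).\<close>

definition int_pts :: "(real ^ 'n) set" where
  "int_pts = {v. \<forall>i. v $ i \<in> \<int>}"

definition refl_X :: "(real ^ 'n \<Rightarrow> real ^ 'n) \<Rightarrow> real ^ 'n \<Rightarrow> real ^ 'n \<Rightarrow> real ^ 'n" where
  "refl_X cor \<alpha> x = x - (x \<bullet> cor \<alpha>) *\<^sub>R \<alpha>"

definition refl_Lam :: "(real ^ 'n \<Rightarrow> real ^ 'n) \<Rightarrow> real ^ 'n \<Rightarrow> real ^ 'n \<Rightarrow> real ^ 'n" where
  "refl_Lam cor \<alpha> y = y - (\<alpha> \<bullet> y) *\<^sub>R cor \<alpha>"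

definition reduced_root_datum :: "(real ^ 'n) set \<Rightarrow> (real ^ 'n \<Rightarrow> real ^ 'n) \<Rightarrow> bool" where
  "reduced_root_datum R cor \<longleftrightarrow>
     finite R \<and> R \<subseteq> int_pts \<and> cor ` R \<subseteq> int_pts \<and> inj_on cor R \<and>
     (\<forall>\<alpha>\<in>R. \<alpha> \<bullet> cor \<alpha> = 2) \<and>
     (\<forall>\<alpha>\<in>R. refl_X cor \<alpha> ` R = R) \<and>
     (\<forall>\<alpha>\<in>R. refl_Lam cor \<alpha> ` (cor ` R) = cor ` R) \<and>
     (\<forall>\<alpha>\<in>R. \<forall>c::real. c *\<^sub>R \<alpha> \<in> R \<longrightarrow> c = 1 \<or> c = -1)"

definition positive_system :: "(real ^ 'n) set \<Rightarrow> (real ^ 'n) set \<Rightarrow> bool" where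
  "positive_system R Rp \<longleftrightarrow>
     (\<exists>v. (\<forall>\<alpha>\<in>R. v \<bullet> \<alpha> \<noteq> 0) \<and> Rp = {\<alpha>\<in>R. v \<bullet> \<alpha> > 0})"

text \<open>Weyl group, as pairs (action on X^*(T) (x) R, action on Lambda (x) R),
generated by the simple-reflection pairs; the two actions are contragredient.\<close>
inductive_set weyl :: "(real ^ 'n) set \<Rightarrow> (real ^ 'n \<Rightarrow> real ^ 'n) \<Rightarrow>
    ((real ^ 'n \<Rightarrow> real ^ 'n) \<times> (real ^ 'n \<Rightarrow> real ^ 'n)) set"
  for R cor where
  weyl_id: "(id, id) \<in> weyl R cor"
| weyl_step: "(f, g) \<in> weyl R cor \<Longrightarrow> \<alpha> \<in> R \<Longrightarrow>
     (refl_X cor \<alpha> \<circ> f, refl_Lam cor \<alpha> \<circ> g) \<in> weyl R cor"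

definition dominant :: "(real ^ 'n) set \<Rightarrow> (real ^ 'n \<Rightarrow> real ^ 'n) \<Rightarrow> real ^ 'n \<Rightarrow> bool" where
  "dominant Rp cor z \<longleftrightarrow> (\<forall>\<alpha>\<in>Rp. z \<bullet> cor \<alpha> \<ge> 0)"

definition dom_pt :: "(real ^ 'n) set \<Rightarrow> (real ^ 'n) set \<Rightarrow> (real ^ 'n \<Rightarrow> real ^ 'n)
    \<Rightarrow> real ^ 'n \<Rightarrow> real ^ 'n" where
  "dom_pt R Rp cor z = (THE y. dominant Rp cor y \<and> (\<exists>w\<in>weyl R cor. y = fst w z))"

definition root_le :: "(real ^ 'n) set \<Rightarrow> real ^ 'n \<Rightarrow> real ^ 'n \<Rightarrow> bool" where
  "root_le Rp z z' \<longleftrightarrow> (\<exists>c. (\<forall>\<alpha>\<in>Rp. c \<alpha> \<ge> 0) \<and> z' - z = (\<Sum>\<alpha>\<in>Rp. c \<alpha> *\<^sub>R \<alpha>))"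

definition half_sum :: "(real ^ 'n) set \<Rightarrow> real ^ 'n" where
  "half_sum Rp = (1/2) *\<^sub>R (\<Sum>\<alpha>\<in>Rp. \<alpha>)"

text \<open>Lambda^{--}: lambda(T^{--}) (l ranges over Lambda), i.e. |alpha(t)|_L >= 1, i.e. val_L(alpha(t)) <= 0.\<close>
definition antidom_lattice :: "(real ^ 'n) set \<Rightarrow> (real ^ 'n) set" where
  "antidom_lattice Rp = {l\<in>int_pts. \<forall>\<alpha>\<in>Rp. \<alpha> \<bullet> l \<le> 0}"

text \<open>val_L(gamma_xi(w, lambda)) for d = [L:Q_p]:
  val_L(|alpha(t)|_L) = -d * val_L(alpha(t)) and val_L of the pi_L-power is
  val_L(xi(^w t)) - val_L(xi(t)).  The condition alpha not in ^{w^{-1}}Phi^+ means ^w alpha not in Phi^+.\<close>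
definition val_gamma :: "nat \<Rightarrow> (real ^ 'n) set \<Rightarrow> real ^ 'n \<Rightarrow>
    ((real ^ 'n \<Rightarrow> real ^ 'n) \<times> (real ^ 'n \<Rightarrow> real ^ 'n)) \<Rightarrow> real ^ 'n \<Rightarrow> real" where
  "val_gamma d Rp \<xi> w l =
     - real d * (\<Sum>\<alpha>\<in>{\<alpha>\<in>Rp. fst w \<alpha> \<notin> Rp}. \<alpha> \<bullet> l) + (\<xi> \<bullet> snd w l - \<xi> \<bullet> l)"

text \<open>V_R^xi; gamma^dom(lambda) = gamma(w, lambda) for any w with ^w lambda in Lambda^{--}.\<close>
definition V_xi :: "nat \<Rightarrow> (real ^ 'n) set \<Rightarrow> (real ^ 'n) set \<Rightarrow> (real ^ 'n \<Rightarrow> real ^ 'n)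
    \<Rightarrow> real ^ 'n \<Rightarrow> (real ^ 'n) set" where
  "V_xi d R Rp cor \<xi> = {z. \<forall>l\<in>int_pts. \<forall>w\<in>weyl R cor.
      snd w l \<in> antidom_lattice Rp \<longrightarrow> z \<bullet> l \<ge> val_gamma d Rp \<xi> w l}"

end

theory Submission
  imports Defs "HOL-Analysis.Analysis"
begin



locale rdat =
  fixes R :: "(real ^ 'n) set" and cor :: "real ^ 'n \<Rightarrow> real ^ 'n"
    and Rp :: "(real ^ 'n) set" and v :: "real ^ 'n"
  assumes finR: "finite R" and injc: "inj_on cor R"
    and two: "\<And>a. a \<in> R \<Longrightarrow> a \<bullet> cor a = 2"
    and reflXR: "\<And>a. a \<in> R \<Longrightarrow> refl_X cor a ` R = R"
    and reflLR: "\<And>a. a \<in> R \<Longrightarrow> refl_Lam cor a ` (cor ` R) = cor ` R"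
    and red: "\<And>a c. a \<in> R \<Longrightarrow> c *\<^sub>R a \<in> R \<Longrightarrow> c = 1 \<or> c = -1"
    and vnz: "\<And>a. a \<in> R \<Longrightarrow> v \<bullet> a \<noteq> 0"
    and Rp_def: "Rp = {a \<in> R. v \<bullet> a > 0}"
begin

abbreviation "sX \<equiv> refl_X cor"
abbreviation "sL \<equiv> refl_Lam cor"
abbreviation "W \<equiv> weyl R cor"

lemma sX_sX: "a \<in> R \<Longrightarrow> sX a (sX a x) = x"
  by (simp add: refl_X_def inner_diff_left two algebra_simps)

lemma sL_sL: "a \<in> R \<Longrightarrow> sL a (sL a x) = x"
  by (simp add: refl_Lam_def inner_diff_right two inner_commute algebra_simps)

lemma sX_adj: "sX a x \<bullet> q = x \<bullet> sL a q"
  by (simp add: refl_X_def refl_Lam_def inner_diff_left inner_diff_right inner_commute algebra_simps)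

lemma sX_pair: "a \<in> R \<Longrightarrow> sX a x \<bullet> sL a q = x \<bullet> q"
  by (simp add: sX_adj sL_sL)

lemma sX_self: "a \<in> R \<Longrightarrow> sX a a = - a"
  by (simp add: refl_X_def two scaleR_2)

lemma sL_self: "a \<in> R \<Longrightarrow> sL a (cor a) = - cor a"
  by (simp add: refl_Lam_def two scaleR_2)

lemma neg_root: "a \<in> R \<Longrightarrow> - a \<in> R"
  using reflXR[of a] sX_self[of a] by (metis imageI)

lemma root_nz: "a \<in> R \<Longrightarrow> a \<noteq> 0"
  using two[of a] by auto

lemma linear_sX: "linear (sX a)"
  by (rule linearI) (simp_all add: refl_X_def inner_add_left algebra_simps)

lemma linear_sL: "linear (sL a)"
  by (rule linearI) (simp_all add: refl_Lam_def inner_add_right algebra_simps)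

lemma vec_eq_inner: "(\<And>x. x \<bullet> u = x \<bullet> (w::real^'n)) \<Longrightarrow> u = w"
  by (metis inner_diff_left inner_diff_right inner_eq_zero_iff right_minus_eq)

definition Bf :: "real ^ 'n \<Rightarrow> real ^ 'n \<Rightarrow> real" where
  "Bf x y = (\<Sum>b\<in>R. (x \<bullet> cor b) * (y \<bullet> cor b))"

lemma sum_cor: "(\<Sum>b\<in>R. F (cor b)) = (\<Sum>c\<in>cor ` R. F c)"
  by (simp add: sum.reindex injc)

lemma inj_sL: "a \<in> R \<Longrightarrow> inj_on (sL a) A"
  by (metis inj_onI sL_sL)

lemma inj_sX: "a \<in> R \<Longrightarrow> inj_on (sX a) A"
  by (metis inj_onI sX_sX)

lemma sum_sL: "a \<in> R \<Longrightarrow> (\<Sum>c\<in>cor ` R. F (sL a c)) = (\<Sum>c\<in>cor ` R. F c)"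
proof -
  assume a: "a \<in> R"
  have "(\<Sum>c\<in>sL a ` (cor ` R). F c) = (\<Sum>c\<in>cor ` R. F (sL a c))"
    by (simp add: sum.reindex inj_sL[OF a])
  then show ?thesis using reflLR[OF a] by simp
qed

lemma sum_sX: "a \<in> R \<Longrightarrow> (\<Sum>c\<in>R. F (sX a c)) = (\<Sum>c\<in>R. F c)"
proof -
  assume a: "a \<in> R"
  have "(\<Sum>c\<in>sX a ` R. F c) = (\<Sum>c\<in>R. F (sX a c))"
    by (simp add: sum.reindex inj_sX[OF a])
  then show ?thesis using reflXR[OF a] by simp
qed

lemma Bf_inv: "a \<in> R \<Longrightarrow> Bf (sX a x) (sX a y) = Bf x y"
proof -
  assume a: "a \<in> R"
  have "Bf (sX a x) (sX a y) = (\<Sum>b\<in>R. (x \<bullet> sL a (cor b)) * (y \<bullet> sL a (cor b)))"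
    by (simp add: Bf_def sX_adj)
  also have "\<dots> = (\<Sum>c\<in>cor ` R. (x \<bullet> sL a c) * (y \<bullet> sL a c))"
    by (rule sum_cor)
  also have "\<dots> = (\<Sum>c\<in>cor ` R. (x \<bullet> c) * (y \<bullet> c))"
    by (rule sum_sL[OF a])
  also have "\<dots> = Bf x y" unfolding Bf_def by (rule sum_cor[symmetric])
  finally show ?thesis .
qed

lemma Bf_sym: "Bf x y = Bf y x"
  by (simp add: Bf_def mult.commute)

lemma Bf_diff_left: "Bf (x - y) z = Bf x z - Bf y z"
  by (simp add: Bf_def inner_diff_left sum_subtractf algebra_simps)

lemma Bf_add_left: "Bf (x + y) z = Bf x z + Bf y z"
  by (simp add: Bf_def inner_add_left sum.distrib algebra_simps)

lemma Bf_scale_left: "Bf (c *\<^sub>R x) z = c * Bf x z"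
  by (simp add: Bf_def sum_distrib_left algebra_simps)

lemma Bf_neg_left: "Bf (- x) z = - Bf x z"
  by (simp add: Bf_def sum_negf)

lemma Bf_diff_right: "Bf z (x - y) = Bf z x - Bf z y"
  by (metis Bf_sym Bf_diff_left)
lemma Bf_add_right: "Bf z (x + y) = Bf z x + Bf z y"
  by (metis Bf_sym Bf_add_left)
lemma Bf_scale_right: "Bf z (c *\<^sub>R x) = c * Bf z x"
  by (metis Bf_sym Bf_scale_left)
lemma Bf_neg_right: "Bf z (- x) = - Bf z x"
  by (metis Bf_sym Bf_neg_left)

lemma Bf_sum_right: "finite A \<Longrightarrow> Bf z (\<Sum>a\<in>A. k a *\<^sub>R a) = (\<Sum>a\<in>A. k a * Bf z a)"
proof (induction A rule: finite_induct)
  case empty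
  then show ?case by (simp add: Bf_def)
next
  case (insert x F)
  then show ?case by (simp add: Bf_add_right Bf_scale_right)
qed

lemma Bf_nonneg: "Bf x x \<ge> 0"
  by (simp add: Bf_def sum_nonneg)

lemma Bf_pos: "a \<in> R \<Longrightarrow> Bf a a > 0"
proof -
  assume a: "a \<in> R"
  have "(a \<bullet> cor a) * (a \<bullet> cor a) \<le> Bf a a"
    unfolding Bf_def by (rule member_le_sum) (auto simp: a finR)
  then show ?thesis using two[OF a] by simp
qed

lemma Bf_formula: "a \<in> R \<Longrightarrow> (x \<bullet> cor a) * Bf a a = 2 * Bf x a"
proof -
  assume a: "a \<in> R"
  have na: "sX a (- a) = a" using linear_sX[of a] sX_self[OF a]
    by (simp add: linear_neg)
  have "Bf (sX a x) a = Bf (sX a x) (sX a (- a))" by (simp add: na)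
  also have "\<dots> = - Bf x a" by (simp add: Bf_inv a Bf_neg_right)
  finally have 1: "Bf (sX a x) a = - Bf x a" .
  have "Bf (sX a x) a = Bf x a - (x \<bullet> cor a) * Bf a a"
    by (simp add: refl_X_def Bf_diff_left Bf_scale_left)
  with 1 show ?thesis by simp
qed

lemma coroot_pair: "a \<in> R \<Longrightarrow> x \<bullet> cor a = 2 * Bf x a / Bf a a"
  using Bf_formula[of a x] Bf_pos[of a] by (simp add: field_simps)

lemma cor_sX: "a \<in> R \<Longrightarrow> b \<in> R \<Longrightarrow> cor (sX a b) = sL a (cor b)"
proof -
  assume a: "a \<in> R" and b: "b \<in> R"
  have b': "sX a b \<in> R" using reflXR[OF a] b by blast
  show ?thesis
  proof (rule vec_eq_inner)
    fix x
    have "x \<bullet> cor (sX a b) = 2 * Bf x (sX a b) / Bf (sX a b) (sX a b)"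
      by (rule coroot_pair[OF b'])
    also have "\<dots> = 2 * Bf (sX a x) b / Bf b b"
      by (metis Bf_inv a sX_sX)
    also have "\<dots> = sX a x \<bullet> cor b" by (rule coroot_pair[OF b, symmetric])
    also have "\<dots> = x \<bullet> sL a (cor b)" by (rule sX_adj)
    finally show "x \<bullet> cor (sX a b) = x \<bullet> sL a (cor b)" .
  qed
qed

lemma cor_neg: "b \<in> R \<Longrightarrow> cor (- b) = - cor b"
proof -
  assume b: "b \<in> R"
  have b': "- b \<in> R" by (rule neg_root[OF b])
  show ?thesis
  proof (rule vec_eq_inner)
    fix x
    have "x \<bullet> cor (- b) = 2 * Bf x (- b) / Bf (- b) (- b)"
      by (rule coroot_pair[OF b'])
    also have "\<dots> = - (2 * Bf x b / Bf b b)"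
      by (simp add: Bf_neg_left Bf_neg_right)
    also have "\<dots> = x \<bullet> - cor b" using coroot_pair[OF b, of x] by simp
    finally show "x \<bullet> cor (- b) = x \<bullet> - cor b" .
  qed
qed

lemma sX_neg: "b \<in> R \<Longrightarrow> sX (- b) = sX b"
  by (rule ext) (simp add: refl_X_def cor_neg)

end



context rdat
begin

lemma W_refl: "a \<in> R \<Longrightarrow> (sX a, sL a) \<in> W"
  using weyl_step[OF weyl_id, of a R cor] by simp

lemma W_comp: "(f, g) \<in> W \<Longrightarrow> (f', g') \<in> W \<Longrightarrow> (f \<circ> f', g \<circ> g') \<in> W"
proof (induction rule: weyl.induct)
  case weyl_id
  then show ?case by simp
next
  case (weyl_step f g a)
  have "(sX a \<circ> (f \<circ> f'), sL a \<circ> (g \<circ> g')) \<in> W"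
    by (rule weyl.weyl_step[OF weyl_step(3)[OF weyl_step(4)] weyl_step(2)])
  then show ?case by (simp only: comp_assoc)
qed

lemma W_inv: "(f, g) \<in> W \<Longrightarrow> \<exists>f' g'. (f', g') \<in> W \<and> f' \<circ> f = id \<and> f \<circ> f' = id \<and> g' \<circ> g = id \<and> g \<circ> g' = id"
proof (induction rule: weyl.induct)
  case weyl_id
  then show ?case using weyl.weyl_id by fastforce
next
  case (weyl_step f g a)
  then obtain f' g' where fg: "(f', g') \<in> W" "f' \<circ> f = id" "f \<circ> f' = id" "g' \<circ> g = id" "g \<circ> g' = id"
    by blast
  have m: "(f' \<circ> sX a, g' \<circ> sL a) \<in> W" by (rule W_comp[OF fg(1) W_refl[OF weyl_step(2)]])
  have sxx: "sX a \<circ> sX a = id" "sL a \<circ> sL a = id"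
    using sX_sX[OF weyl_step(2)] sL_sL[OF weyl_step(2)] by (auto simp: fun_eq_iff)
  have "(f' \<circ> sX a) \<circ> (sX a \<circ> f) = id"
    by (metis comp_assoc comp_id fg(2) sxx(1))
  moreover have "(sX a \<circ> f) \<circ> (f' \<circ> sX a) = id"
    by (metis comp_assoc comp_id fg(3) sxx(1))
  moreover have "(g' \<circ> sL a) \<circ> (sL a \<circ> g) = id"
    by (metis comp_assoc comp_id fg(4) sxx(2))
  moreover have "(sL a \<circ> g) \<circ> (g' \<circ> sL a) = id"
    by (metis comp_assoc comp_id fg(5) sxx(2))
  ultimately show ?case using m by blast
qed

lemma W_pair: "(f, g) \<in> W \<Longrightarrow> f x \<bullet> g q = x \<bullet> q"
  by (induction rule: weyl.induct) (simp_all add: sX_pair)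

lemma W_linear: "(f, g) \<in> W \<Longrightarrow> linear f \<and> linear g"
proof (induction rule: weyl.induct)
  case weyl_id
  then show ?case by (simp add: id_def linear_ident)
next
  case (weyl_step f g a)
  then show ?case by (metis linear_compose linear_sX linear_sL)
qed

lemma W_R: "(f, g) \<in> W \<Longrightarrow> f ` R = R"
  by (induction rule: weyl.induct) (simp, metis image_comp reflXR)

lemma W_corR: "(f, g) \<in> W \<Longrightarrow> g ` (cor ` R) = cor ` R"
  by (induction rule: weyl.induct) (simp, metis image_comp reflLR)

lemma W_cor: "(f, g) \<in> W \<Longrightarrow> b \<in> R \<Longrightarrow> cor (f b) = g (cor b)"
proof (induction rule: weyl.induct)
  case weyl_id
  then show ?case by simp
next
  case (weyl_step f g a)
  have "f b \<in> R" using W_R[OF weyl_step(1)] weyl_step(4) by blast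
  then show ?case using weyl_step by (simp add: cor_sX)
qed

lemma W_span: "(f, g) \<in> W \<Longrightarrow> f x - x \<in> span R"
proof (induction rule: weyl.induct)
  case weyl_id
  then show ?case by (simp add: span_zero)
next
  case (weyl_step f g a)
  have "(sX a \<circ> f) x - x = (f x - x) - (f x \<bullet> cor a) *\<^sub>R a"
    by (simp add: refl_X_def)
  moreover have "(f x - x) - (f x \<bullet> cor a) *\<^sub>R a \<in> span R"
    using weyl_step by (meson span_diff span_scale span_base)
  moreover have "(f x - x) - (f x \<bullet> cor a) *\<^sub>R a = (sX a \<circ> f) x - x"
    by (simp add: refl_X_def algebra_simps)
  ultimately show ?case by metis
qed

end



context rdat
begin

definition BL :: "real ^ 'n \<Rightarrow> real ^ 'n \<Rightarrow> real" where
  "BL p q = (\<Sum>b\<in>R. (b \<bullet> p) * (b \<bullet> q))"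

lemma BL_inv: "a \<in> R \<Longrightarrow> BL (sL a p) (sL a q) = BL p q"
proof -
  assume a: "a \<in> R"
  have "BL (sL a p) (sL a q) = (\<Sum>b\<in>R. (sX a b \<bullet> p) * (sX a b \<bullet> q))"
    by (simp add: BL_def sX_adj)
  also have "\<dots> = BL p q" unfolding BL_def by (rule sum_sX[OF a])
  finally show ?thesis .
qed

lemma BL_sym: "BL p q = BL q p"
  by (simp add: BL_def mult.commute)

lemma BL_diff_left: "BL (x - y) z = BL x z - BL y z"
  by (simp add: BL_def inner_diff_right sum_subtractf algebra_simps)
lemma BL_scale_left: "BL (c *\<^sub>R x) z = c * BL x z"
  by (simp add: BL_def sum_distrib_left algebra_simps)
lemma BL_neg_left: "BL (- x) z = - BL x z"
  by (simp add: BL_def sum_negf)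
lemma BL_neg_right: "BL z (- x) = - BL z x"
  by (metis BL_sym BL_neg_left)
lemma BL_add_right: "BL z (x + y) = BL z x + BL z y"
  by (simp add: BL_def inner_add_right sum.distrib algebra_simps)
lemma BL_scale_right: "BL z (c *\<^sub>R x) = c * BL z x"
  by (simp add: BL_def sum_distrib_left algebra_simps)

lemma BL_sum_right: "finite A \<Longrightarrow> BL z (\<Sum>a\<in>A. k a *\<^sub>R h a) = (\<Sum>a\<in>A. k a * BL z (h a))"
proof (induction A rule: finite_induct)
  case empty
  then show ?case by (simp add: BL_def)
next
  case (insert x F)
  then show ?case by (simp add: BL_add_right BL_scale_right)
qed

lemma BL_pos: "a \<in> R \<Longrightarrow> BL (cor a) (cor a) > 0"
proof -
  assume a: "a \<in> R"
  have "(a \<bullet> cor a) * (a \<bullet> cor a) \<le> BL (cor a) (cor a)"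
    unfolding BL_def by (rule member_le_sum) (auto simp: a finR)
  then show ?thesis using two[OF a] by simp
qed

lemma BL_formula: "a \<in> R \<Longrightarrow> (a \<bullet> p) * BL (cor a) (cor a) = 2 * BL p (cor a)"
proof -
  assume a: "a \<in> R"
  have na: "sL a (- cor a) = cor a" using linear_sL[of a] sL_self[OF a]
    by (simp add: linear_neg)
  have "BL (sL a p) (cor a) = BL (sL a p) (sL a (- cor a))" by (simp add: na)
  also have "\<dots> = - BL p (cor a)" by (simp add: BL_inv a BL_neg_right)
  finally have 1: "BL (sL a p) (cor a) = - BL p (cor a)" .
  have "BL (sL a p) (cor a) = BL p (cor a) - (a \<bullet> p) * BL (cor a) (cor a)"
    by (simp add: refl_Lam_def BL_diff_left BL_scale_left)
  with 1 show ?thesis by simp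
qed

lemma nondeg:
  assumes "\<delta> \<in> span R" and "\<And>b. b \<in> R \<Longrightarrow> \<delta> \<bullet> cor b = 0"
  shows "\<delta> = 0"
proof -
  obtain c where dc: "\<delta> = (\<Sum>a\<in>R. c a *\<^sub>R a)"
    using assms(1) finR span_finite by blast
  define u where "u = (\<Sum>a\<in>R. (c a * 2 / BL (cor a) (cor a)) *\<^sub>R cor a)"
  have key: "\<delta> \<bullet> q = BL q u" for q
  proof -
    have "\<delta> \<bullet> q = (\<Sum>a\<in>R. c a * (a \<bullet> q))"
      by (simp add: dc inner_sum_left)
    also have "\<dots> = (\<Sum>a\<in>R. (c a * 2 / BL (cor a) (cor a)) * BL q (cor a))"
    proof (rule sum.cong[OF refl])
      fix a assume a: "a \<in> R"
      have "a \<bullet> q = 2 * BL q (cor a) / BL (cor a) (cor a)"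
        using BL_formula[OF a, of q] BL_pos[OF a] by (simp add: field_simps)
      then show "c a * (a \<bullet> q) = (c a * 2 / BL (cor a) (cor a)) * BL q (cor a)" by simp
    qed
    also have "\<dots> = BL q u" unfolding u_def by (rule BL_sum_right[OF finR, symmetric])
    finally show ?thesis .
  qed
  have "BL u u = (\<Sum>a\<in>R. (c a * 2 / BL (cor a) (cor a)) * BL u (cor a))"
    unfolding u_def by (rule BL_sum_right[OF finR])
  also have "\<dots> = 0"
    using key assms(2) by (simp add: BL_sym)
  finally have "BL u u = 0" .
  then have "(\<Sum>b\<in>R. (b \<bullet> u) * (b \<bullet> u)) = 0" by (simp add: BL_def)
  then have "\<forall>b\<in>R. (b \<bullet> u) * (b \<bullet> u) = 0"
    by (subst (asm) sum_nonneg_eq_0_iff) (auto simp: finR)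
  then have "BL q u = 0" for q by (simp add: BL_def)
  then have "\<delta> \<bullet> \<delta> = 0" using key by simp
  then show ?thesis by simp
qed

lemma W_det:
  assumes "(f, g) \<in> W" "(f', g') \<in> W" "\<And>c. c \<in> cor ` R \<Longrightarrow> g c = g' c"
  shows "f = f'"
proof (rule ext)
  fix x
  have "f x - f' x = (f x - x) - (f' x - x)" by simp
  then have sp: "f x - f' x \<in> span R"
    using W_span[OF assms(1)] W_span[OF assms(2)] by (metis span_diff)
  show "f x = f' x"
  proof -
    have "f x - f' x = 0"
    proof (rule nondeg[OF sp])
      fix b assume b: "b \<in> R"
      obtain c where c: "c \<in> cor ` R" "cor b = g c"
        using W_corR[OF assms(1)] b by (metis imageE imageI)
      have "(f x - f' x) \<bullet> g c = f x \<bullet> g c - f' x \<bullet> g' c"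
        using assms(3)[OF c(1)] by (simp add: inner_diff_left)
      also have "\<dots> = 0" using W_pair[OF assms(1)] W_pair[OF assms(2)] by simp
      finally show "(f x - f' x) \<bullet> cor b = 0" using c by simp
    qed
    then show ?thesis by simp
  qed
qed

lemma W_finite: "finite (fst ` W)"
proof -
  let ?C = "cor ` R"
  let ?k = "\<lambda>w. restrict (snd w) ?C"
  let ?G = "\<lambda>k. fst (SOME w. w \<in> W \<and> ?k w = k)"
  have "fst ` W \<subseteq> ?G ` (?k ` W)"
  proof
    fix f assume "f \<in> fst ` W"
    then obtain w where w: "w \<in> W" "f = fst w" by blast
    define w' where "w' = (SOME w'. w' \<in> W \<and> ?k w' = ?k w)"
    have w': "w' \<in> W \<and> ?k w' = ?k w" unfolding w'_def by (rule someI[of _ w]) (simp add: w)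
    have "fst w' = fst w"
    proof (rule W_det[of "fst w'" "snd w'" "fst w" "snd w"])
      show "(fst w', snd w') \<in> W" using w' by simp
      show "(fst w, snd w) \<in> W" using w by simp
      fix c assume "c \<in> ?C"
      then show "snd w' c = snd w c" using w' by (metis restrict_apply')
    qed
    then have "f = ?G (?k w)" using w w'_def by simp
    then show "f \<in> ?G ` (?k ` W)" using w by blast
  qed
  moreover have "?k ` W \<subseteq> PiE ?C (\<lambda>_. ?C)"
  proof
    fix k assume "k \<in> ?k ` W"
    then obtain w where w: "w \<in> W" "k = ?k w" by blast
    have "snd w ` ?C = ?C" using W_corR[of "fst w" "snd w"] w by simp
    then show "k \<in> PiE ?C (\<lambda>_. ?C)" using w by auto
  qed
  then have "finite (?k ` W)" by (rule finite_subset) (simp add: finite_PiE finR)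
  ultimately show ?thesis by (meson finite_imageI finite_subset)
qed

end



lemma cone_hull_finite:
  fixes S :: "'a::real_vector set"
  assumes "finite S"
  shows "convex_cone hull S = {x. \<exists>k. (\<forall>a\<in>S. k a \<ge> 0) \<and> x = (\<Sum>a\<in>S. k a *\<^sub>R a)}"
    (is "_ = ?K")
proof
  show "convex_cone hull S \<subseteq> ?K"
  proof (rule hull_minimal)
    show "S \<subseteq> ?K"
    proof
      fix x assume x: "x \<in> S"
      have "(\<Sum>a\<in>S. (if a = x then 1 else 0) *\<^sub>R a) = (\<Sum>a\<in>S. if a = x then a else 0)"
        by (rule sum.cong) auto
      also have "\<dots> = x" using assms x by (simp add: sum.delta)
      finally have "(\<Sum>a\<in>S. (if a = x then 1 else 0) *\<^sub>R a) = x" .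
      then show "x \<in> ?K" by (intro CollectI exI[of _ "\<lambda>a. if a = x then 1 else 0"]) auto
    qed
    show "convex_cone ?K"
      unfolding convex_cone_iff
    proof (intro conjI)
      show "0 \<in> ?K" by (intro CollectI exI[of _ "\<lambda>a. 0"]) auto
      show "\<forall>x\<in>?K. \<forall>y\<in>?K. x + y \<in> ?K"
      proof (intro ballI)
        fix x y assume "x \<in> ?K" "y \<in> ?K"
        then obtain k l where "\<forall>a\<in>S. k a \<ge> 0" "x = (\<Sum>a\<in>S. k a *\<^sub>R a)"
          "\<forall>a\<in>S. l a \<ge> 0" "y = (\<Sum>a\<in>S. l a *\<^sub>R a)" by blast
        then show "x + y \<in> ?K"
          by (intro CollectI exI[of _ "\<lambda>a. k a + l a"]) (auto simp: scaleR_add_left sum.distrib)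
      qed
      show "\<forall>x\<in>?K. \<forall>c\<ge>0. c *\<^sub>R x \<in> ?K"
      proof (intro ballI allI impI)
        fix x and c :: real assume "x \<in> ?K" "c \<ge> 0"
        then obtain k where "\<forall>a\<in>S. k a \<ge> 0" "x = (\<Sum>a\<in>S. k a *\<^sub>R a)" by blast
        then show "c *\<^sub>R x \<in> ?K" using \<open>c \<ge> 0\<close>
          by (intro CollectI exI[of _ "\<lambda>a. c * k a"]) (auto simp: scaleR_sum_right)
      qed
    qed
  qed
  show "?K \<subseteq> convex_cone hull S"
  proof
    fix x assume "x \<in> ?K"
    then obtain k where k: "\<forall>a\<in>S. k a \<ge> 0" "x = (\<Sum>a\<in>S. k a *\<^sub>R a)" by blast
    have "\<And>T. T \<subseteq> S \<Longrightarrow> (\<Sum>a\<in>T. k a *\<^sub>R a) \<in> convex_cone hull S"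
    proof -
      fix T assume "T \<subseteq> S"
      then have "finite T" using assms finite_subset by blast
      then show "T \<subseteq> S \<Longrightarrow> (\<Sum>a\<in>T. k a *\<^sub>R a) \<in> convex_cone hull S"
      proof (induction T rule: finite_induct)
        case empty
        then show ?case by (simp add: convex_cone_hull_contains_0)
      next
        case (insert y F)
        have "(\<Sum>a\<in>insert y F. k a *\<^sub>R a) = k y *\<^sub>R y + (\<Sum>a\<in>F. k a *\<^sub>R a)"
          using insert(1,2) by simp
        moreover have "k y *\<^sub>R y \<in> convex_cone hull S"
          using insert(4) k(1) by (intro convex_cone_hull_mul hull_inc) auto
        moreover have "(\<Sum>a\<in>F. k a *\<^sub>R a) \<in> convex_cone hull S"
          using insert(3,4) by simp
        ultimately show ?case by (metis convex_cone_hull_add)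
      qed
    qed
    then show "x \<in> convex_cone hull S" using k by blast
  qed
qed

context rdat
begin

lemma Rp_sub: "Rp \<subseteq> R" using Rp_def by auto
lemma finRp: "finite Rp" using Rp_sub finR finite_subset by blast

lemma pos_or_neg: "b \<in> R \<Longrightarrow> b \<in> Rp \<or> - b \<in> Rp"
  using vnz[of b] neg_root[of b] by (auto simp: Rp_def)

lemma not_both: "b \<in> Rp \<Longrightarrow> - b \<notin> Rp"
  by (auto simp: Rp_def)

lemma notpos_neg: "b \<in> R \<Longrightarrow> b \<notin> Rp \<Longrightarrow> - b \<in> Rp"
  using pos_or_neg by blast

lemma W_inR: "(f, g) \<in> W \<Longrightarrow> b \<in> R \<Longrightarrow> f b \<in> R"
  using W_R by blast

lemma W_conj:
  assumes "(f, g) \<in> W" "b \<in> R"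
  shows "f \<circ> sX b = sX (f b) \<circ> f"
proof (rule ext)
  fix x
  have lf: "linear f" using W_linear[OF assms(1)] by simp
  have "sX (f b) (f x) = f x - (f x \<bullet> g (cor b)) *\<^sub>R f b"
    by (simp add: refl_X_def W_cor[OF assms])
  also have "\<dots> = f x - (x \<bullet> cor b) *\<^sub>R f b" by (simp add: W_pair[OF assms(1)])
  also have "\<dots> = f (sX b x)" by (simp add: refl_X_def linear_diff[OF lf] linear_scale[OF lf])
  finally show "(f \<circ> sX b) x = (sX (f b) \<circ> f) x" by simp
qed

primrec P :: "(real ^ 'n) list \<Rightarrow> real ^ 'n \<Rightarrow> real ^ 'n" where
  "P [] = id"
| "P (a # as) = sX a \<circ> P as"

primrec PL :: "(real ^ 'n) list \<Rightarrow> real ^ 'n \<Rightarrow> real ^ 'n" where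
  "PL [] = id"
| "PL (a # as) = sL a \<circ> PL as"

lemma PW: "set as \<subseteq> R \<Longrightarrow> (P as, PL as) \<in> W"
  by (induction as) (auto intro: weyl.intros)

lemma P_append: "P (as @ bs) = P as \<circ> P bs"
  by (induction as) (simp_all add: comp_assoc)

end

locale rsimp = rdat +
  fixes D
  assumes D_sub: "D \<subseteq> Rp" and D_span: "Rp \<subseteq> convex_cone hull D"
    and D_min: "\<And>D'. D' \<subseteq> Rp \<Longrightarrow> Rp \<subseteq> convex_cone hull D' \<Longrightarrow> card D \<le> card D'"
begin

lemma finD: "finite D" using D_sub finRp finite_subset by blast
lemma D_R: "D \<subseteq> R" using D_sub Rp_sub by blast

lemma D_rep: "b \<in> Rp \<Longrightarrow> \<exists>k. (\<forall>a\<in>D. k a \<ge> 0) \<and> b = (\<Sum>a\<in>D. k a *\<^sub>R a)"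
  using D_span cone_hull_finite[OF finD] by blast

lemma D_nored: "a \<in> D \<Longrightarrow> a \<notin> convex_cone hull (D - {a})"
proof
  assume a: "a \<in> D" and h: "a \<in> convex_cone hull (D - {a})"
  have "D \<subseteq> convex_cone hull (D - {a})"
  proof
    fix x assume "x \<in> D"
    show "x \<in> convex_cone hull (D - {a})"
    proof (cases "x = a")
      case True then show ?thesis using h by simp
    next
      case False then show ?thesis using \<open>x \<in> D\<close> by (intro hull_inc) simp
    qed
  qed
  then have "convex_cone hull D \<subseteq> convex_cone hull (D - {a})"
    by (rule hull_minimal) (rule convex_cone_convex_cone_hull)
  then have "Rp \<subseteq> convex_cone hull (D - {a})" using D_span by blast
  then have "card D \<le> card (D - {a})" using D_min D_sub by blast
  moreover have "card (D - {a}) < card D" using a finD by (meson card_Diff1_less)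
  ultimately show False by simp
qed

end



context rsimp
begin

lemma D_pos: "a \<in> D \<Longrightarrow> v \<bullet> a > 0" using D_sub Rp_def by auto

lemma perm:
  assumes a: "a \<in> D" and b: "b \<in> Rp" "b \<noteq> a"
  shows "sX a b \<in> Rp"
proof (rule ccontr)
  assume nb: "sX a b \<notin> Rp"
  have aR: "a \<in> R" "a \<in> Rp" using a D_R D_sub by auto
  have bR: "b \<in> R" using b Rp_sub by auto
  have sbR: "sX a b \<in> R" using reflXR[OF aR(1)] bR by blast
  obtain k where k: "\<forall>x\<in>D. k x \<ge> 0" "b = (\<Sum>x\<in>D. k x *\<^sub>R x)" using D_rep b(1) by blast
  obtain m where m: "\<forall>x\<in>D. m x \<ge> 0" "- sX a b = (\<Sum>x\<in>D. m x *\<^sub>R x)"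
    using D_rep notpos_neg[OF sbR nb] by blast
  have g0: "\<exists>g\<in>D. g \<noteq> a \<and> k g > 0"
  proof (rule ccontr)
    assume "\<not> (\<exists>g\<in>D. g \<noteq> a \<and> k g > 0)"
    then have z: "\<forall>x\<in>D-{a}. k x = 0" using k(1) by force
    have "b = k a *\<^sub>R a + (\<Sum>x\<in>D-{a}. k x *\<^sub>R x)"
      using k(2) sum.remove[OF finD a, of "\<lambda>x. k x *\<^sub>R x"] by simp
    also have "(\<Sum>x\<in>D-{a}. k x *\<^sub>R x) = 0" using z by simp
    finally have "b = k a *\<^sub>R a" by simp
    then have "k a = 1 \<or> k a = -1" using red[OF aR(1), of "k a"] bR by simp
    then show False using \<open>b = k a *\<^sub>R a\<close> b(2) not_both[OF aR(2)] b(1) by auto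
  qed
  then obtain g where g: "g \<in> D" "g \<noteq> a" "k g > 0" by blast
  define c where "c = b \<bullet> cor a"
  define e where "e = k a + m a"
  have sab: "sX a b = b - c *\<^sub>R a" by (simp add: refl_X_def c_def)
  have "(\<Sum>x\<in>D. (k x + m x) *\<^sub>R x) = (\<Sum>x\<in>D. k x *\<^sub>R x) + (\<Sum>x\<in>D. m x *\<^sub>R x)"
    by (simp add: scaleR_add_left sum.distrib)
  also have "\<dots> = b + (- sX a b)"
    by (simp only: k(2)[symmetric] m(2)[symmetric])
  also have "\<dots> = c *\<^sub>R a" by (simp add: sab)
  finally have s1: "(\<Sum>x\<in>D. (k x + m x) *\<^sub>R x) = c *\<^sub>R a" .
  have "(\<Sum>x\<in>D. (k x + m x) *\<^sub>R x) = e *\<^sub>R a + (\<Sum>x\<in>D-{a}. (k x + m x) *\<^sub>R x)"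
    using sum.remove[OF finD a, of "\<lambda>x. (k x + m x) *\<^sub>R x"] by (simp add: e_def)
  with s1 have eq: "(\<Sum>x\<in>D-{a}. (k x + m x) *\<^sub>R x) = (c - e) *\<^sub>R a"
    by (simp add: algebra_simps)
  show False
  proof (cases "c - e \<le> 0")
    case True
    have e1: "v \<bullet> (\<Sum>x\<in>D-{a}. (k x + m x) *\<^sub>R x) = (\<Sum>x\<in>D-{a}. (k x + m x) * (v \<bullet> x))"
      by (simp add: inner_sum_right)
    have e2: "(k g + m g) * (v \<bullet> g) \<le> (\<Sum>x\<in>D-{a}. (k x + m x) * (v \<bullet> x))"
    proof (rule member_le_sum)
      show "g \<in> D - {a}" using g by simp
      show "finite (D - {a})" using finD by simp
      fix x assume "x \<in> D - {a} - {g}"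
      then have "x \<in> D" by simp
      then show "0 \<le> (k x + m x) * (v \<bullet> x)"
        using k(1) m(1) D_pos by (meson add_nonneg_nonneg less_imp_le mult_nonneg_nonneg)
    qed
    have ge: "v \<bullet> (\<Sum>x\<in>D-{a}. (k x + m x) *\<^sub>R x) \<ge> (k g + m g) * (v \<bullet> g)"
      using e1 e2 by linarith
    have "k g + m g > 0" using g k(1) m(1) by (simp add: add_pos_nonneg)
    then have "(k g + m g) * (v \<bullet> g) > 0" using D_pos[OF g(1)] by simp
    then have "v \<bullet> (\<Sum>x\<in>D-{a}. (k x + m x) *\<^sub>R x) > 0" using ge by linarith
    moreover have "v \<bullet> ((c - e) *\<^sub>R a) \<le> 0"
      using True D_pos[OF a] by (simp add: mult_nonpos_nonneg)
    ultimately show False using eq by simp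
  next
    case False
    have "a = inverse (c - e) *\<^sub>R ((c - e) *\<^sub>R a)" using False by simp
    also have "\<dots> = inverse (c - e) *\<^sub>R (\<Sum>x\<in>D-{a}. (k x + m x) *\<^sub>R x)" by (simp add: eq)
    also have "\<dots> = (\<Sum>x\<in>D-{a}. (inverse (c - e) * (k x + m x)) *\<^sub>R x)"
      by (simp add: scaleR_sum_right)
    finally have "a = (\<Sum>x\<in>D-{a}. (inverse (c - e) * (k x + m x)) *\<^sub>R x)" .
    moreover have "\<forall>x\<in>D-{a}. inverse (c - e) * (k x + m x) \<ge> 0"
      using False k(1) m(1) by auto
    ultimately have "a \<in> {y. \<exists>l. (\<forall>x\<in>D - {a}. l x \<ge> 0) \<and> y = (\<Sum>x\<in>D - {a}. l x *\<^sub>R x)}"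
      by (intro CollectI exI[of _ "\<lambda>x. inverse (c - e) * (k x + m x)"]) simp
    then have "a \<in> convex_cone hull (D - {a})"
      using cone_hull_finite[of "D - {a}"] finD by simp
    then show False using D_nored[OF a] by blast
  qed
qed

lemma exists_simple:
  assumes b: "b \<in> Rp"
  shows "\<exists>a\<in>D. b \<bullet> cor a > 0"
proof (rule ccontr)
  assume "\<not> ?thesis"
  then have n: "\<forall>a\<in>D. b \<bullet> cor a \<le> 0" by auto
  have bR: "b \<in> R" using b Rp_sub by auto
  obtain k where k: "\<forall>x\<in>D. k x \<ge> 0" "b = (\<Sum>x\<in>D. k x *\<^sub>R x)" using D_rep b by blast
  have "Bf b b = Bf b (\<Sum>x\<in>D. k x *\<^sub>R x)" by (simp only: k(2)[symmetric])
  also have "\<dots> = (\<Sum>x\<in>D. k x * Bf b x)" by (rule Bf_sum_right[OF finD])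
  also have "\<dots> \<le> 0"
  proof (rule sum_nonpos)
    fix x assume x: "x \<in> D"
    then have xR: "x \<in> R" using D_R by auto
    have "b \<bullet> cor x * Bf x x = 2 * Bf b x" by (rule Bf_formula[OF xR])
    moreover have "b \<bullet> cor x * Bf x x \<le> 0" using n x Bf_pos[OF xR]
      by (simp add: mult_nonpos_nonneg)
    ultimately have "Bf b x \<le> 0" by linarith
    then show "k x * Bf b x \<le> 0" using k(1) x by (simp add: mult_nonneg_nonpos)
  qed
  finally show False using Bf_pos[OF bR] by simp
qed

lemma gen_pos: "b \<in> Rp \<Longrightarrow> \<exists>as. set as \<subseteq> D \<and> sX b = P as"
proof (induction "card {c\<in>Rp. v \<bullet> c < v \<bullet> b}" arbitrary: b rule: less_induct)
  case less
  show ?case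
  proof (cases "b \<in> D")
    case True
    then show ?thesis by (intro exI[of _ "[b]"]) simp
  next
    case False
    obtain a where a: "a \<in> D" "b \<bullet> cor a > 0" using exists_simple[OF less.prems] by blast
    have aR: "a \<in> R" using a D_R by auto
    have ba: "b \<noteq> a" using False a by auto
    define b' where "b' = sX a b"
    have b': "b' \<in> Rp" unfolding b'_def by (rule perm[OF a(1) less.prems ba])
    have "v \<bullet> b' = v \<bullet> b - (b \<bullet> cor a) * (v \<bullet> a)"
      by (simp add: b'_def refl_X_def inner_diff_right)
    then have vl: "v \<bullet> b' < v \<bullet> b" using a(2) D_pos[OF a(1)] by simp
    have "{c\<in>Rp. v \<bullet> c < v \<bullet> b'} \<subset> {c\<in>Rp. v \<bullet> c < v \<bullet> b}"
      using vl b' by auto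
    then have "card {c\<in>Rp. v \<bullet> c < v \<bullet> b'} < card {c\<in>Rp. v \<bullet> c < v \<bullet> b}"
      by (rule psubset_card_mono[rotated]) (simp add: finRp)
    then obtain bs where bs: "set bs \<subseteq> D" "sX b' = P bs" using less.hyps b' by blast
    have "sX a \<circ> sX b' = sX (sX a b') \<circ> sX a" by (rule W_conj[OF W_refl[OF aR]]) (use b' Rp_sub in auto)
    also have "sX a b' = b" unfolding b'_def by (rule sX_sX[OF aR])
    finally have c1: "sX a \<circ> sX b' = sX b \<circ> sX a" .
    have "sX a \<circ> sX b' \<circ> sX a = sX b"
      using c1 sX_sX[OF aR] by (simp add: fun_eq_iff)
    then have "sX b = P ([a] @ bs @ [a])" using bs(2) by (simp add: P_append comp_assoc)
    then show ?thesis using bs(1) a(1) by (intro exI[of _ "[a] @ bs @ [a]"]) auto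
  qed
qed

lemma gen_root: "b \<in> R \<Longrightarrow> \<exists>as. set as \<subseteq> D \<and> sX b = P as"
proof -
  assume b: "b \<in> R"
  show ?thesis
  proof (cases "b \<in> Rp")
    case True
    then show ?thesis by (rule gen_pos)
  next
    case False
    then have "- b \<in> Rp" using pos_or_neg[OF b] by simp
    then obtain as where "set as \<subseteq> D" "sX (- b) = P as" using gen_pos by blast
    then show ?thesis using sX_neg[OF b] by auto
  qed
qed

lemma gen_W: "(f, g) \<in> W \<Longrightarrow> \<exists>as. set as \<subseteq> D \<and> f = P as"
proof (induction rule: weyl.induct)
  case weyl_id
  then show ?case by (intro exI[of _ "[]"]) simp
next
  case (weyl_step f g a)
  obtain as where as: "set as \<subseteq> D" "f = P as" using weyl_step by blast
  obtain bs where bs: "set bs \<subseteq> D" "sX a = P bs" using gen_root[OF weyl_step(2)] by blast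
  show ?case using as bs by (intro exI[of _ "bs @ as"]) (simp add: P_append)
qed

lemma P_W: "set as \<subseteq> D \<Longrightarrow> (P as, PL as) \<in> W"
  using PW D_R by blast

lemma exchange:
  assumes "set as \<subseteq> D" "a \<in> D" "P as a \<notin> Rp"
  shows "\<exists>i<length as. P as \<circ> sX a = P (take i as @ drop (Suc i) as)"
  using assms
proof (induction as)
  case Nil
  then show ?case using D_sub by auto
next
  case (Cons c bs)
  have cD: "c \<in> D" and bsD: "set bs \<subseteq> D" using Cons.prems by auto
  have cR: "c \<in> R" using cD D_R by auto
  show ?case
  proof (cases "P bs a \<in> Rp")
    case True
    have "sX c (P bs a) \<notin> Rp" using Cons.prems by simp
    then have eqc: "P bs a = c" using perm[OF cD True] by blast
    have "P bs \<circ> sX a = sX (P bs a) \<circ> P bs"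
      by (rule W_conj[OF P_W[OF bsD]]) (use Cons.prems D_R in auto)
    then have "P bs \<circ> sX a = sX c \<circ> P bs" using eqc by simp
    then have e1: "sX c \<circ> (P bs \<circ> sX a) = sX c \<circ> (sX c \<circ> P bs)" by simp
    have e2: "sX c \<circ> (sX c \<circ> P bs) = P bs"
      using sX_sX[OF cR] by (simp add: fun_eq_iff)
    have e3: "P (c # bs) \<circ> sX a = sX c \<circ> (P bs \<circ> sX a)" by (simp add: comp_assoc)
    have e4: "P (take 0 (c # bs) @ drop (Suc 0) (c # bs)) = P bs" by simp
    have "P (c # bs) \<circ> sX a = P (take 0 (c # bs) @ drop (Suc 0) (c # bs))"
      by (simp only: e1 e2 e3 e4)
    then show ?thesis by blast
  next
    case False
    then obtain i where i: "i < length bs" "P bs \<circ> sX a = P (take i bs @ drop (Suc i) bs)"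
      using Cons.IH bsD Cons.prems by blast
    have "P (c # bs) \<circ> sX a = sX c \<circ> (P bs \<circ> sX a)" by (simp add: comp_assoc)
    also have "\<dots> = sX c \<circ> P (take i bs @ drop (Suc i) bs)" by (simp only: i(2))
    also have "\<dots> = P (take (Suc i) (c # bs) @ drop (Suc (Suc i)) (c # bs))" by simp
    finally have "P (c # bs) \<circ> sX a = P (take (Suc i) (c # bs) @ drop (Suc (Suc i)) (c # bs))" .
    moreover have "Suc i < length (c # bs)" using i(1) by simp
    ultimately show ?thesis by blast
  qed
qed

lemma uniq_P:
  assumes "set as \<subseteq> D" "dominant Rp cor x" "dominant Rp cor (P as x)"
  shows "P as x = x"
  using assms
proof (induction "length as" arbitrary: as rule: less_induct)
  case less
  show ?case
  proof (cases "\<exists>bs. set bs \<subseteq> D \<and> length bs < length as \<and> P bs = P as")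
    case True
    then obtain bs where "set bs \<subseteq> D" "length bs < length as" "P bs = P as" by blast
    then have "P bs x = x" using less.hyps[of bs] less.prems(2) less.prems(3) by metis
    then show ?thesis using \<open>P bs = P as\<close> by simp
  next
    case nored: False
    show ?thesis
    proof (cases as rule: rev_exhaust)
      case Nil
      then show ?thesis by simp
    next
      case (snoc cs a)
      have aD: "a \<in> D" and csD: "set cs \<subseteq> D" using less.prems snoc by auto
      have aR: "a \<in> R" using aD D_R by auto
      have Pas: "P as = P cs \<circ> sX a" using snoc by (simp add: P_append)
      have lin: "linear (P cs)" using W_linear[OF P_W[OF csD]] by simp
      have PasR: "P as a \<in> R" using W_inR[OF P_W[OF less.prems(1)] aR] .
      have neg: "P as a = - P cs a"
        using Pas sX_self[OF aR] by (simp add: linear_neg[OF lin])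
      have notpos: "P as a \<notin> Rp"
      proof
        assume pos: "P as a \<in> Rp"
        have "- P cs a \<in> Rp" using pos neg by simp
        then have "- (- P cs a) \<notin> Rp" by (rule not_both)
        then have "P cs a \<notin> Rp" by simp
        then obtain i where i: "i < length cs" "P cs \<circ> sX a = P (take i cs @ drop (Suc i) cs)"
          using exchange[OF csD aD] by blast
        have "set (take i cs @ drop (Suc i) cs) \<subseteq> D"
          using csD set_take_subset[of i cs] set_drop_subset[of "Suc i" cs] by auto
        moreover have "length (take i cs @ drop (Suc i) cs) < length as"
          using i(1) snoc by simp
        moreover have "P (take i cs @ drop (Suc i) cs) = P as" using i(2) Pas by simp
        ultimately show False using nored by blast
      qed
      define g where "g = - P as a"
      have gpos: "g \<in> Rp" unfolding g_def by (rule notpos_neg[OF PasR notpos])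
      have gR: "g \<in> R" using gpos Rp_sub by auto
      have "x \<bullet> cor a \<ge> 0" using less.prems(2) aD D_sub by (auto simp: dominant_def)
      moreover have "x \<bullet> cor a = P as x \<bullet> cor (P as a)"
        using W_pair[OF P_W[OF less.prems(1)]] W_cor[OF P_W[OF less.prems(1)] aR] by simp
      moreover have "cor (P as a) = - cor g"
        using cor_neg[OF gR] by (simp add: g_def)
      moreover have "P as x \<bullet> cor g \<ge> 0" using less.prems(3) gpos by (auto simp: dominant_def)
      ultimately have x0: "x \<bullet> cor a = 0"
        by (metis add.inverse_inverse inner_minus_right neg_0_le_iff_le order_antisym)
      have "sX a x = x" by (simp add: refl_X_def x0)
      then have "P as x = P cs x" using Pas by simp
      moreover have "P cs x = x"
      proof (rule less.hyps)
        show "length cs < length as" using snoc by simp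
        show "set cs \<subseteq> D" by (rule csD)
        show "dominant Rp cor x" by (rule less.prems(2))
        show "dominant Rp cor (P cs x)" using less.prems(3) \<open>P as x = P cs x\<close> by simp
      qed
      ultimately show ?thesis by simp
    qed
  qed
qed

lemma uniq_W:
  assumes "(f, g) \<in> W" "dominant Rp cor x" "dominant Rp cor (f x)"
  shows "f x = x"
  using gen_W[OF assms(1)] uniq_P assms(2,3) by blast

end



context rsimp
begin

definition orb where
  "orb z = {x. \<exists>f g. (f, g) \<in> W \<and> x = f z}"

lemma orb_iff: "x \<in> orb z \<longleftrightarrow> (\<exists>f g. (f, g) \<in> W \<and> x = f z)"
  unfolding orb_def by simp

lemma Rp_pos: "a \<in> Rp \<Longrightarrow> v \<bullet> a > 0" using Rp_def by blast

lemma orb_finite: "finite (orb z)"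
proof -
  have "orb z \<subseteq> (\<lambda>f. f z) ` (fst ` W)"
  proof
    fix x assume "x \<in> orb z"
    then obtain f g where "(f, g) \<in> W" "x = f z" unfolding orb_iff by blast
    then show "x \<in> (\<lambda>f. f z) ` (fst ` W)" by (metis fst_conv image_eqI)
  qed
  moreover have "finite ((\<lambda>f. f z) ` (fst ` W))" using W_finite by (rule finite_imageI)
  ultimately show ?thesis by (rule finite_subset)
qed

lemma orb_self: "z \<in> orb z"
  unfolding orb_iff using weyl.weyl_id by fastforce

lemma orb_refl: "x \<in> orb z \<Longrightarrow> a \<in> R \<Longrightarrow> sX a x \<in> orb z"
proof -
  assume x: "x \<in> orb z" and a: "a \<in> R"
  then obtain f g where fg: "(f, g) \<in> W" "x = f z" unfolding orb_iff by blast
  have "(sX a \<circ> f, sL a \<circ> g) \<in> W" by (rule weyl.weyl_step[OF fg(1) a])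
  moreover have "sX a x = (sX a \<circ> f) z" using fg(2) by simp
  ultimately show ?thesis unfolding orb_iff by blast
qed

lemma W_inj: "(f, g) \<in> W \<Longrightarrow> inj f"
proof -
  assume "(f, g) \<in> W"
  then obtain f' g' where "(f', g') \<in> W" "f' \<circ> f = id" using W_inv by blast
  then have "\<And>x. f' (f x) = x" by (simp add: fun_eq_iff)
  then show "inj f" by (rule inj_on_inverseI)
qed

lemma orb_W: "(f, g) \<in> W \<Longrightarrow> x \<in> orb y \<Longrightarrow> f x \<in> orb y"
proof -
  assume fg: "(f, g) \<in> W" and x: "x \<in> orb y"
  then obtain f' g' where fg': "(f', g') \<in> W" "x = f' y" unfolding orb_iff by blast
  have "(f \<circ> f', g \<circ> g') \<in> W" by (rule W_comp[OF fg fg'(1)])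
  moreover have "f x = (f \<circ> f') y" using fg'(2) by simp
  ultimately show ?thesis unfolding orb_iff by blast
qed

lemma exists_dom: "\<exists>x\<in>orb z. dominant Rp cor x"
proof -
  let ?V = "(\<lambda>x. v \<bullet> x) ` orb z"
  let ?M = "Max ?V"
  have fin: "finite ?V" using orb_finite by (rule finite_imageI)
  have "v \<bullet> z \<in> ?V" using orb_self by (rule imageI)
  then have ne: "?V \<noteq> {}" by (metis empty_iff)
  have "?M \<in> ?V" by (rule Max_in[OF fin ne])
  then obtain x where x0: "x \<in> orb z" "?M = v \<bullet> x" by (rule imageE)
  have x: "x \<in> orb z" "v \<bullet> x = ?M" using x0 by simp_all
  have "dominant Rp cor x"
    unfolding dominant_def
  proof (rule ccontr)
    assume "\<not> (\<forall>a\<in>Rp. 0 \<le> x \<bullet> cor a)"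
    then obtain a where a: "a \<in> Rp" "x \<bullet> cor a < 0" by force
    have aR: "a \<in> R" using a Rp_sub by auto
    have x': "sX a x \<in> orb z" by (rule orb_refl[OF x(1) aR])
    have e: "v \<bullet> sX a x = v \<bullet> x - (x \<bullet> cor a) * (v \<bullet> a)"
      by (simp add: refl_X_def inner_diff_right)
    have n: "(x \<bullet> cor a) * (v \<bullet> a) < 0" using a(2) Rp_pos[OF a(1)] by (rule mult_neg_pos)
    have "v \<bullet> sX a x \<in> ?V" using x' by (rule imageI)
    then have "v \<bullet> sX a x \<le> ?M" by (rule Max_ge[OF fin])
    then show False using e n x(2) by linarith
  qed
  then show ?thesis using x(1) by blast
qed

lemma orb_dom_unique:
  assumes "x \<in> orb z" "y \<in> orb z" "dominant Rp cor x" "dominant Rp cor y"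
  shows "x = y"
proof -
  obtain f g where fg: "(f, g) \<in> W" "x = f z" using assms(1) unfolding orb_iff by blast
  obtain f2 g2 where fg2: "(f2, g2) \<in> W" "y = f2 z" using assms(2) unfolding orb_iff by blast
  obtain f' g' where inv: "(f', g') \<in> W" "f' \<circ> f = id" using W_inv[OF fg(1)] by blast
  have c: "(f2 \<circ> f', g2 \<circ> g') \<in> W" by (rule W_comp[OF fg2(1) inv(1)])
  have "f' x = z" using fg(2) inv(2) by (simp add: fun_eq_iff)
  then have "y = (f2 \<circ> f') x" using fg2(2) by simp
  then have "(f2 \<circ> f') x = x" using uniq_W[OF c assms(3)] assms(4) by simp
  then show ?thesis using \<open>y = (f2 \<circ> f') x\<close> by simp
qed

lemma dom_pt_prop: "dom_pt R Rp cor z \<in> orb z \<and> dominant Rp cor (dom_pt R Rp cor z)"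
proof -
  obtain x where x: "x \<in> orb z" "dominant Rp cor x" using exists_dom by blast
  have eqv: "(\<exists>w\<in>W. y = fst w z) \<longleftrightarrow> y \<in> orb z" for y
    unfolding orb_iff by (metis fst_conv prod.collapse)
  have "dom_pt R Rp cor z = x"
    unfolding dom_pt_def
  proof (rule the_equality)
    show "dominant Rp cor x \<and> (\<exists>w\<in>W. x = fst w z)" using x eqv by blast
    fix y assume "dominant Rp cor y \<and> (\<exists>w\<in>W. y = fst w z)"
    then have "y \<in> orb z" "dominant Rp cor y" using eqv by blast+
    then show "y = x" using orb_dom_unique[of y z x] x by blast
  qed
  then show ?thesis using x by simp
qed

lemma lemmaA:
  assumes y: "dominant Rp cor y" and x: "x \<in> orb y"
  shows "y - x \<in> convex_cone hull Rp"
  using x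
proof (induction "card {x'\<in>orb y. v \<bullet> x' > v \<bullet> x}" arbitrary: x rule: less_induct)
  case less
  show ?case
  proof (cases "dominant Rp cor x")
    case True
    then have "x = y" using orb_dom_unique[OF less.prems orb_self True y] by simp
    then show ?thesis by (simp add: convex_cone_hull_contains_0)
  next
    case False
    then obtain a where a: "a \<in> Rp" "x \<bullet> cor a < 0" unfolding dominant_def using not_le by blast
    have aR: "a \<in> R" using a Rp_sub by auto
    define x' where "x' = sX a x"
    have x': "x' \<in> orb y" unfolding x'_def by (rule orb_refl[OF less.prems aR])
    have "v \<bullet> x' = v \<bullet> x - (x \<bullet> cor a) * (v \<bullet> a)"
      by (simp add: x'_def refl_X_def inner_diff_right)
    moreover have "(x \<bullet> cor a) * (v \<bullet> a) < 0" using a(2) Rp_pos[OF a(1)] by (rule mult_neg_pos)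
    ultimately have vx: "v \<bullet> x' > v \<bullet> x" by simp
    have "{x''\<in>orb y. v \<bullet> x'' > v \<bullet> x'} \<subset> {x''\<in>orb y. v \<bullet> x'' > v \<bullet> x}"
      using vx x' by auto
    then have "card {x''\<in>orb y. v \<bullet> x'' > v \<bullet> x'} < card {x''\<in>orb y. v \<bullet> x'' > v \<bullet> x}"
      by (rule psubset_card_mono[rotated]) (simp add: orb_finite)
    then have ih: "y - x' \<in> convex_cone hull Rp" using less.hyps x' by blast
    have "(- (x \<bullet> cor a)) *\<^sub>R a \<in> convex_cone hull Rp"
      using a by (intro convex_cone_hull_mul hull_inc) auto
    then have m: "(y - x') + (- (x \<bullet> cor a)) *\<^sub>R a \<in> convex_cone hull Rp"
      using ih by (rule convex_cone_hull_add[rotated])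
    have "y - x = (y - x') + (- (x \<bullet> cor a)) *\<^sub>R a"
      by (simp add: x'_def refl_X_def algebra_simps)
    with m show ?thesis by (simp only:)
  qed
qed

end



context rsimp
begin

lemma sum_sX_Rp:
  assumes a: "a \<in> D"
  shows "(\<Sum>b\<in>Rp. sX a b) = (\<Sum>b\<in>Rp. b) - 2 *\<^sub>R a"
proof -
  have aR: "a \<in> R" and aRp: "a \<in> Rp" using a D_R D_sub by auto
  have img: "sX a ` (Rp - {a}) = Rp - {a}"
  proof
    show "sX a ` (Rp - {a}) \<subseteq> Rp - {a}"
    proof
      fix y assume "y \<in> sX a ` (Rp - {a})"
      then obtain b where b: "b \<in> Rp" "b \<noteq> a" "y = sX a b" by blast
      have "y \<in> Rp" using perm[OF a b(1) b(2)] b(3) by simp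
      moreover have "y \<noteq> a"
      proof
        assume "y = a"
        then have "b = sX a a" using b(3) sX_sX[OF aR] by metis
        then have "b = - a" using sX_self[OF aR] by simp
        then show False using b(1) not_both[OF aRp] by simp
      qed
      ultimately show "y \<in> Rp - {a}" by simp
    qed
    show "Rp - {a} \<subseteq> sX a ` (Rp - {a})"
    proof
      fix b assume b: "b \<in> Rp - {a}"
      have "sX a b \<in> Rp - {a}"
      proof -
        have "sX a b \<in> Rp" using perm[OF a] b by simp
        moreover have "sX a b \<noteq> a"
        proof
          assume "sX a b = a"
          then have "b = sX a a" using sX_sX[OF aR] by metis
          then have "b = - a" using sX_self[OF aR] by simp
          then show False using b not_both[OF aRp] by simp
        qed
        ultimately show ?thesis by simp
      qed
      moreover have "b = sX a (sX a b)" using sX_sX[OF aR] by simp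
      ultimately show "b \<in> sX a ` (Rp - {a})" by (rule rev_image_eqI)
    qed
  qed
  have "(\<Sum>b\<in>Rp. sX a b) = sX a a + (\<Sum>b\<in>Rp - {a}. sX a b)"
    by (rule sum.remove[OF finRp aRp])
  also have "(\<Sum>b\<in>Rp - {a}. sX a b) = (\<Sum>b\<in>sX a ` (Rp - {a}). b)"
    by (simp add: sum.reindex inj_sX[OF aR])
  also have "\<dots> = (\<Sum>b\<in>Rp - {a}. b)" by (simp only: img)
  also have "(\<Sum>b\<in>Rp - {a}. b) = (\<Sum>b\<in>Rp. b) - a"
    using sum.remove[OF finRp aRp, of "\<lambda>b. b"] by simp
  finally show ?thesis using sX_self[OF aR] by (simp add: scaleR_2)
qed

lemma eta_simple:
  assumes a: "a \<in> D"
  shows "half_sum Rp \<bullet> cor a = 1"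
proof -
  have aR: "a \<in> R" using a D_R by auto
  have lin: "linear (sX a)" by (rule linear_sX)
  have "sX a (half_sum Rp) = (1/2) *\<^sub>R (\<Sum>b\<in>Rp. sX a b)"
    unfolding half_sum_def by (simp add: linear_scale[OF lin] linear_sum[OF lin])
  also have "\<dots> = half_sum Rp - a"
    unfolding sum_sX_Rp[OF a] half_sum_def by (simp add: algebra_simps)
  finally have 1: "sX a (half_sum Rp) = half_sum Rp - a" .
  have "sX a (half_sum Rp) = half_sum Rp - (half_sum Rp \<bullet> cor a) *\<^sub>R a"
    by (simp add: refl_X_def)
  with 1 have "(half_sum Rp \<bullet> cor a) *\<^sub>R a = 1 *\<^sub>R a" by simp
  then show ?thesis using root_nz[OF aR] by (metis scaleR_cancel_right)
qed

lemma eta_dom: "dominant Rp cor (half_sum Rp)"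
  unfolding dominant_def
proof
  fix b assume b: "b \<in> Rp"
  have bR: "b \<in> R" using b Rp_sub by auto
  obtain k where k: "\<forall>x\<in>D. k x \<ge> 0" "b = (\<Sum>x\<in>D. k x *\<^sub>R x)" using D_rep b by blast
  have "Bf (half_sum Rp) b = Bf (half_sum Rp) (\<Sum>x\<in>D. k x *\<^sub>R x)" by (simp only: k(2)[symmetric])
  also have "\<dots> = (\<Sum>x\<in>D. k x * Bf (half_sum Rp) x)" by (rule Bf_sum_right[OF finD])
  also have "\<dots> \<ge> 0"
  proof (rule sum_nonneg)
    fix x assume x: "x \<in> D"
    have xR: "x \<in> R" using x D_R by auto
    have "half_sum Rp \<bullet> cor x * Bf x x = 2 * Bf (half_sum Rp) x" by (rule Bf_formula[OF xR])
    then have "Bf (half_sum Rp) x = Bf x x / 2" using eta_simple[OF x] by simp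
    then have "Bf (half_sum Rp) x \<ge> 0" using Bf_pos[OF xR] by simp
    then show "0 \<le> k x * Bf (half_sum Rp) x" using k(1) x by simp
  qed
  finally have "Bf (half_sum Rp) b \<ge> 0" .
  then show "0 \<le> half_sum Rp \<bullet> cor b"
    using coroot_pair[OF bR, of "half_sum Rp"] Bf_pos[OF bR] by simp
qed

lemma eta_inner: "half_sum Rp \<bullet> x = (1/2) * (\<Sum>b\<in>Rp. b \<bullet> x)"
  by (simp add: half_sum_def inner_sum_left)

lemma Nsum:
  assumes fg: "(f, g) \<in> W"
  shows "(\<Sum>a\<in>{a\<in>Rp. f a \<notin> Rp}. a \<bullet> l) = half_sum Rp \<bullet> l - half_sum Rp \<bullet> g l"
proof -
  define P1 where "P1 = {a\<in>Rp. f a \<in> Rp}"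
  define P2 where "P2 = {a\<in>Rp. f a \<notin> Rp}"
  have fin1: "finite P1" and fin2: "finite P2" unfolding P1_def P2_def using finRp by auto
  have injf: "inj f" by (rule W_inj[OF fg])
  have lin: "linear f" using W_linear[OF fg] by simp
  have fneg: "f (- x) = - f x" for x by (rule linear_neg[OF lin])
  have cover: "Rp = f ` P1 \<union> (\<lambda>a. - f a) ` P2"
  proof
    show "Rp \<subseteq> f ` P1 \<union> (\<lambda>a. - f a) ` P2"
    proof
      fix b assume b: "b \<in> Rp"
      then have "b \<in> f ` R" using W_R[OF fg] Rp_sub by auto
      then obtain c where c: "c \<in> R" "b = f c" by blast
      show "b \<in> f ` P1 \<union> (\<lambda>a. - f a) ` P2"
      proof (cases "c \<in> Rp")
        case True
        then have "c \<in> P1" unfolding P1_def using b c by simp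
        then show ?thesis using c by blast
      next
        case False
        then have nc: "- c \<in> Rp" using notpos_neg c by blast
        have "f (- c) = - b" using c fneg by simp
        then have "f (- c) \<notin> Rp" using not_both[OF b] by simp
        then have "- c \<in> P2" unfolding P2_def using nc by simp
        moreover have "b = - f (- c)" using c fneg by simp
        ultimately show ?thesis by blast
      qed
    qed
    show "f ` P1 \<union> (\<lambda>a. - f a) ` P2 \<subseteq> Rp"
    proof
      fix b assume "b \<in> f ` P1 \<union> (\<lambda>a. - f a) ` P2"
      then show "b \<in> Rp"
      proof
        assume "b \<in> f ` P1" then show ?thesis unfolding P1_def by blast
      next
        assume "b \<in> (\<lambda>a. - f a) ` P2"
        then obtain a where a: "a \<in> P2" "b = - f a" by blast
        have "f a \<in> R" using a(1) W_R[OF fg] Rp_sub unfolding P2_def by auto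
        then show ?thesis using notpos_neg a unfolding P2_def by auto
      qed
    qed
  qed
  have disj: "f ` P1 \<inter> (\<lambda>a. - f a) ` P2 = {}"
  proof (rule ccontr)
    assume "f ` P1 \<inter> (\<lambda>a. - f a) ` P2 \<noteq> {}"
    then obtain a1 a2 where a: "a1 \<in> P1" "a2 \<in> P2" "f a1 = - f a2" by blast
    then have "f a1 = f (- a2)" using fneg by simp
    then have "a1 = - a2" using injf by (simp add: inj_eq)
    then show False using a(1,2) not_both unfolding P1_def P2_def by auto
  qed
  have injn: "inj_on (\<lambda>a. - f a) P2"
  proof (rule inj_onI)
    fix x y assume "- f x = - f y"
    then have "f x = f y" by simp
    then show "x = y" using injf by (simp add: inj_eq)
  qed
  let ?mu = "g l"
  have "(\<Sum>b\<in>Rp. b \<bullet> ?mu) = (\<Sum>b\<in>f ` P1. b \<bullet> ?mu) + (\<Sum>b\<in>(\<lambda>a. - f a) ` P2. b \<bullet> ?mu)"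
    by (subst cover) (rule sum.union_disjoint[OF finite_imageI[OF fin1] finite_imageI[OF fin2] disj])
  also have "(\<Sum>b\<in>f ` P1. b \<bullet> ?mu) = (\<Sum>a\<in>P1. f a \<bullet> ?mu)"
    by (rule sum.reindex[OF inj_on_subset[OF injf subset_UNIV], unfolded comp_def])
  also have "(\<Sum>b\<in>(\<lambda>a. - f a) ` P2. b \<bullet> ?mu) = (\<Sum>a\<in>P2. (- f a) \<bullet> ?mu)"
    by (rule sum.reindex[OF injn, unfolded comp_def])
  finally have s1: "(\<Sum>b\<in>Rp. b \<bullet> ?mu) = (\<Sum>a\<in>P1. a \<bullet> l) - (\<Sum>a\<in>P2. a \<bullet> l)"
    using W_pair[OF fg] by (simp add: sum_negf)
  have RpU: "Rp = P1 \<union> P2" and Pd: "P1 \<inter> P2 = {}" unfolding P1_def P2_def by auto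
  have s2: "(\<Sum>b\<in>Rp. b \<bullet> l) = (\<Sum>a\<in>P1. a \<bullet> l) + (\<Sum>a\<in>P2. a \<bullet> l)"
    by (subst RpU) (rule sum.union_disjoint[OF fin1 fin2 Pd])
  show ?thesis unfolding P2_def[symmetric] eta_inner using s1 s2 by linarith
qed

end



lemma int_inner: "a \<in> int_pts \<Longrightarrow> q \<in> int_pts \<Longrightarrow> a \<bullet> q \<in> \<int>"
  unfolding int_pts_def inner_vec_def by (auto intro!: Ints_sum Ints_mult simp: inner_real_def)

lemma int_diff_scale: "q \<in> int_pts \<Longrightarrow> c \<in> \<int> \<Longrightarrow> u \<in> int_pts \<Longrightarrow> q - c *\<^sub>R u \<in> int_pts"
  unfolding int_pts_def by (auto intro!: Ints_diff Ints_mult)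

lemma int_neg: "q \<in> int_pts \<Longrightarrow> - q \<in> int_pts"
  unfolding int_pts_def by auto

lemma dyadic_int:
  fixes f :: "(real ^ 'n) \<Rightarrow> real"
  assumes "f \<in> Basis \<rightarrow> \<int>"
  shows "(\<Sum>i\<in>Basis. f i *\<^sub>R i :: real ^ 'n) \<in> int_pts"
  unfolding int_pts_def
proof (intro CollectI allI)
  fix j :: 'n
  have b: "axis j (1::real) \<in> Basis" by simp
  have "(\<Sum>i\<in>Basis. f i *\<^sub>R i :: real ^ 'n) $ j = (\<Sum>i\<in>Basis. f i *\<^sub>R i) \<bullet> axis j 1"
    by (simp add: inner_axis)
  also have "\<dots> = (\<Sum>i\<in>Basis. f i * (i \<bullet> axis j 1))"
    by (simp add: inner_sum_left)
  also have "\<dots> = (\<Sum>i\<in>Basis. if i = axis j 1 then f i else 0)"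
    by (rule sum.cong[OF refl]) (simp add: inner_Basis[OF _ b])
  also have "\<dots> = f (axis j 1)" using b by (simp add: sum.delta)
  finally show "(\<Sum>i\<in>Basis. f i *\<^sub>R i :: real ^ 'n) $ j \<in> \<int>" using assms b by auto
qed

context rdat
begin

lemma W_int:
  assumes Ri: "R \<subseteq> int_pts" and Ci: "cor ` R \<subseteq> int_pts"
  shows "(f, g) \<in> W \<Longrightarrow> l \<in> int_pts \<Longrightarrow> g l \<in> int_pts"
proof (induction rule: weyl.induct)
  case weyl_id
  then show ?case by simp
next
  case (weyl_step f g a)
  have gl: "g l \<in> int_pts" using weyl_step by simp
  have "a \<bullet> g l \<in> \<int>" using int_inner Ri weyl_step(2) gl by blast
  moreover have "cor a \<in> int_pts" using Ci weyl_step(2) by blast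
  ultimately have "g l - (a \<bullet> g l) *\<^sub>R cor a \<in> int_pts" using gl by (intro int_diff_scale)
  then show ?case by (simp add: refl_Lam_def)
qed

end

context rsimp
begin

abbreviation "K \<equiv> convex_cone hull Rp"

lemma K_antidom:
  assumes p: "p \<in> K" and mu: "\<forall>a\<in>Rp. a \<bullet> \<mu> \<le> 0"
  shows "p \<bullet> \<mu> \<le> 0"
proof -
  have "K \<subseteq> {p. p \<bullet> \<mu> \<le> 0}"
  proof (rule hull_minimal)
    show "Rp \<subseteq> {p. p \<bullet> \<mu> \<le> 0}" using mu by auto
    show "convex_cone {p. p \<bullet> \<mu> \<le> 0}"
      unfolding convex_cone_iff by (auto simp: inner_add_left mult_nonneg_nonpos)
  qed
  then show ?thesis using p by auto
qed

lemma farkas: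
  assumes H: "\<And>h. (\<forall>a\<in>Rp. a \<bullet> h \<ge> 0) \<Longrightarrow> p \<bullet> h \<ge> 0"
  shows "p \<in> K"
proof (rule ccontr)
  assume np: "p \<notin> K"
  have cl: "closed K" by (rule closed_convex_cone_hull[OF finRp])
  have cv: "convex K" by (rule convex_convex_cone_hull)
  obtain u b where ub: "u \<bullet> p < b" "\<forall>x\<in>K. b < u \<bullet> x"
    using separating_hyperplane_closed_point[OF cv cl np] by blast
  have b0: "b < 0" using ub(2) convex_cone_hull_contains_0 by fastforce
  have pos: "u \<bullet> x \<ge> 0" if x: "x \<in> K" for x
  proof (rule ccontr)
    assume "\<not> u \<bullet> x \<ge> 0"
    then have ux: "u \<bullet> x < 0" by simp
    define t where "t = 2 * b / (u \<bullet> x)"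
    have t0: "t \<ge> 0" unfolding t_def using b0 ux by (simp add: divide_nonpos_neg)
    have "t *\<^sub>R x \<in> K" using x t0 by (rule convex_cone_hull_mul)
    then have "b < u \<bullet> (t *\<^sub>R x)" using ub(2) by blast
    moreover have "u \<bullet> (t *\<^sub>R x) = 2 * b" unfolding t_def using ux by simp
    ultimately show False using b0 by simp
  qed
  have "\<forall>a\<in>Rp. a \<bullet> u \<ge> 0"
    using pos hull_inc by (metis inner_commute)
  then have "p \<bullet> u \<ge> 0" by (rule H)
  then show False using ub(1) b0 by (simp add: inner_commute)
qed

lemma density:
  assumes H: "\<And>h. h \<in> int_pts \<Longrightarrow> (\<forall>a\<in>Rp. a \<bullet> h \<ge> 0) \<Longrightarrow> p \<bullet> h \<ge> 0"
    and h0: "\<forall>a\<in>Rp. a \<bullet> h0 \<ge> 0"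
  shows "p \<bullet> h0 \<ge> 0"
proof (rule ccontr)
  assume "\<not> p \<bullet> h0 \<ge> 0"
  then have ph: "p \<bullet> h0 < 0" by simp
  define eps where "eps = - (p \<bullet> h0) / (2 * (\<bar>p \<bullet> v\<bar> + 1))"
  have den: "2 * (\<bar>p \<bullet> v\<bar> + 1) > 0" by (simp add: add_nonneg_pos)
  have eps0: "eps > 0" unfolding eps_def using ph den by (intro divide_pos_pos) auto
  define h1 where "h1 = h0 + eps *\<^sub>R v"
  have "eps * (p \<bullet> v) \<le> eps * \<bar>p \<bullet> v\<bar>" using eps0 by (simp add: mult_left_mono)
  moreover have "eps * \<bar>p \<bullet> v\<bar> < - (p \<bullet> h0)"
  proof -
    have "eps * (2 * (\<bar>p \<bullet> v\<bar> + 1)) = - (p \<bullet> h0)" unfolding eps_def by simp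
    moreover have "eps * \<bar>p \<bullet> v\<bar> < eps * (2 * (\<bar>p \<bullet> v\<bar> + 1))" using eps0 by simp
    ultimately show ?thesis by simp
  qed
  ultimately have ph1: "p \<bullet> h1 < 0" unfolding h1_def by (simp add: inner_add_right)
  have ah1: "\<forall>a\<in>Rp. a \<bullet> h1 > 0"
  proof
    fix a assume a: "a \<in> Rp"
    have "a \<bullet> v > 0" using Rp_pos[OF a] by (simp add: inner_commute)
    then have "eps * (a \<bullet> v) > 0" using eps0 by simp
    then show "a \<bullet> h1 > 0" using h0 a unfolding h1_def by (simp add: inner_add_right) (smt (verit))
  qed
  define U where "U = {h. p \<bullet> h < 0} \<inter> (\<Inter>a\<in>Rp. {h. a \<bullet> h > 0})"
  have oU: "open U" unfolding U_def
    by (intro open_Int open_INT finRp ballI open_halfspace_gt) (simp add: open_halfspace_lt)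
  have h1U: "h1 \<in> U" unfolding U_def using ph1 ah1 by auto
  let ?DY = "(\<Union>k. \<Union>f \<in> Basis \<rightarrow> \<int>. { \<Sum>i \<in> Basis. (f i / 2^k) *\<^sub>R i :: real ^ 'n })"
  have "U \<inter> closure ?DY \<noteq> {}" using h1U by (auto simp: closure_dyadic_rationals)
  then have "U \<inter> ?DY \<noteq> {}" using open_Int_closure_eq_empty[OF oU] by blast
  then obtain q k f where q: "q \<in> U" "f \<in> Basis \<rightarrow> \<int>" "q = (\<Sum>i \<in> Basis. (f i / 2^k) *\<^sub>R i)"
    by blast
  define h where "h = (2::real)^k *\<^sub>R q"
  have "h = (\<Sum>i \<in> Basis. f i *\<^sub>R i)" unfolding h_def q(3) by (simp add: scaleR_sum_right)
  then have hint: "h \<in> int_pts" using dyadic_int[OF q(2)] by simp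
  have "\<forall>a\<in>Rp. a \<bullet> h \<ge> 0"
  proof
    fix a assume "a \<in> Rp"
    then have "a \<bullet> q > 0" using q(1) unfolding U_def by blast
    then show "a \<bullet> h \<ge> 0" unfolding h_def by simp
  qed
  then have "p \<bullet> h \<ge> 0" by (rule H[OF hint])
  moreover have "p \<bullet> q < 0" using q(1) unfolding U_def by blast
  moreover have "(2::real)^k > 0" by simp
  ultimately show False unfolding h_def using mult_pos_neg[of "(2::real)^k" "p \<bullet> q"] by simp
qed

end



context rsimp
begin

lemma dirA:
  assumes cK: "c - dom_pt R Rp cor y \<in> K" and fg: "(f, g) \<in> W"
    and mu: "g l \<in> antidom_lattice Rp"
  shows "c \<bullet> g l \<le> y \<bullet> l"
proof -
  define y' where "y' = dom_pt R Rp cor y"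
  have yo: "y' \<in> orb y" and yd: "dominant Rp cor y'" using dom_pt_prop[of y] unfolding y'_def by auto
  obtain f0 g0 where fg0: "(f0, g0) \<in> W" "y' = f0 y" using yo unfolding orb_iff by blast
  obtain f' g' where fg': "(f', g') \<in> W" "g' \<circ> g = id" using W_inv[OF fg] by blast
  have c1: "(f0 \<circ> f', g0 \<circ> g') \<in> W" by (rule W_comp[OF fg0(1) fg'(1)])
  obtain Fi Gi where inv: "(Fi, Gi) \<in> W" "(f0 \<circ> f') \<circ> Fi = id" using W_inv[OF c1] by blast
  have am: "\<forall>a\<in>Rp. a \<bullet> g l \<le> 0" using mu unfolding antidom_lattice_def by blast
  have e1: "y \<bullet> l = y' \<bullet> g0 l" using W_pair[OF fg0(1)] fg0(2) by simp
  have "g' (g l) = l" using fg'(2) by (simp add: fun_eq_iff)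
  then have e2: "g0 l = (g0 \<circ> g') (g l)" by simp
  have e3: "(f0 \<circ> f') (Fi y') = y'" using inv(2) by (simp add: fun_eq_iff)
  have "y' \<bullet> (g0 \<circ> g') (g l) = Fi y' \<bullet> g l"
    using W_pair[OF c1, of "Fi y'" "g l"] e3 by simp
  then have e4: "y \<bullet> l = Fi y' \<bullet> g l" using e1 e2 by simp
  have "Fi y' \<in> orb y'" by (rule orb_W[OF inv(1) orb_self])
  then have "y' - Fi y' \<in> K" by (rule lemmaA[OF yd])
  then have "(y' - Fi y') \<bullet> g l \<le> 0" using am by (rule K_antidom)
  moreover have "(c - y') \<bullet> g l \<le> 0" using cK am unfolding y'_def by (rule K_antidom)
  ultimately show ?thesis using e4 by (simp add: inner_diff_left)
qed

lemma dirB: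
  assumes Ri: "R \<subseteq> int_pts" and Ci: "cor ` R \<subseteq> int_pts"
    and H: "\<And>l f g. l \<in> int_pts \<Longrightarrow> (f, g) \<in> W \<Longrightarrow> g l \<in> antidom_lattice Rp \<Longrightarrow> c \<bullet> g l \<le> y \<bullet> l"
  shows "c - dom_pt R Rp cor y \<in> K"
proof -
  define y' where "y' = dom_pt R Rp cor y"
  have yo: "y' \<in> orb y" using dom_pt_prop[of y] unfolding y'_def by auto
  obtain f0 g0 where fg0: "(f0, g0) \<in> W" "y' = f0 y" using yo unfolding orb_iff by blast
  obtain f' g' where fg': "(f', g') \<in> W" "g0 \<circ> g' = id" using W_inv[OF fg0(1)] by blast
  have intp: "(c - y') \<bullet> h \<ge> 0" if h: "h \<in> int_pts" "\<forall>a\<in>Rp. a \<bullet> h \<ge> 0" for h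
  proof -
    define l where "l = g' (- h)"
    have li: "l \<in> int_pts" unfolding l_def by (rule W_int[OF Ri Ci fg'(1) int_neg[OF h(1)]])
    have gl: "g0 l = - h" unfolding l_def using fg'(2) by (simp add: fun_eq_iff)
    have "g0 l \<in> antidom_lattice Rp"
      unfolding gl antidom_lattice_def using h int_neg by auto
    then have "c \<bullet> g0 l \<le> y \<bullet> l" by (rule H[OF li fg0(1)])
    moreover have "y \<bullet> l = y' \<bullet> g0 l" using W_pair[OF fg0(1)] fg0(2) by simp
    ultimately have "c \<bullet> (- h) \<le> y' \<bullet> (- h)" using gl by simp
    then show ?thesis by (simp add: inner_diff_left)
  qed
  have "(c - y') \<bullet> h \<ge> 0" if "\<forall>a\<in>Rp. a \<bullet> h \<ge> 0" for h
    by (rule density[OF intp that])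
  then have "c - y' \<in> K" by (rule farkas)
  then show ?thesis unfolding y'_def .
qed

lemma char:
  assumes Ri: "R \<subseteq> int_pts" and Ci: "cor ` R \<subseteq> int_pts"
  shows "(\<forall>l\<in>int_pts. \<forall>f g. (f, g) \<in> W \<longrightarrow> g l \<in> antidom_lattice Rp \<longrightarrow> c \<bullet> g l \<le> y \<bullet> l)
    \<longleftrightarrow> c - dom_pt R Rp cor y \<in> K"
  using dirA dirB[OF Ri Ci] by blast

lemma val_gamma_eq:
  assumes fg: "(f, g) \<in> W"
  shows "val_gamma d Rp \<xi> (f, g) l = (real d *\<^sub>R half_sum Rp + \<xi>) \<bullet> g l - (real d *\<^sub>R half_sum Rp + \<xi>) \<bullet> l"
proof -
  have N: "(\<Sum>a\<in>{a\<in>Rp. f a \<notin> Rp}. a \<bullet> l) = half_sum Rp \<bullet> l - half_sum Rp \<bullet> g l"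
    by (rule Nsum[OF fg])
  show ?thesis unfolding val_gamma_def fst_conv snd_conv N
    by (simp add: inner_add_left algebra_simps)
qed

end

theorem lemma2p7:
  fixes R Rp :: "(real ^ 'n) set" and cor :: "real ^ 'n \<Rightarrow> real ^ 'n"
    and \<xi> :: "real ^ 'n" and d :: nat
  assumes "reduced_root_datum R cor"
    and "positive_system R Rp"
    and "d \<ge> 1"
    and "\<xi> \<in> int_pts" and "dominant Rp cor \<xi>"
  shows "V_xi d R Rp cor \<xi> =
    {z. root_le Rp (dom_pt R Rp cor (z + real d *\<^sub>R half_sum Rp + \<xi>))
                   (real d *\<^sub>R half_sum Rp + \<xi>)}"
proof -
  have rd: "finite R" "R \<subseteq> int_pts" "cor ` R \<subseteq> int_pts" "inj_on cor R"
    "\<forall>a\<in>R. a \<bullet> cor a = 2" "\<forall>a\<in>R. refl_X cor a ` R = R"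
    "\<forall>a\<in>R. refl_Lam cor a ` (cor ` R) = cor ` R"
    "\<forall>a\<in>R. \<forall>c::real. c *\<^sub>R a \<in> R \<longrightarrow> c = 1 \<or> c = -1"
    using assms(1) unfolding reduced_root_datum_def by blast+
  obtain v where v: "\<forall>a\<in>R. v \<bullet> a \<noteq> 0" "Rp = {a\<in>R. v \<bullet> a > 0}"
    using assms(2) unfolding positive_system_def by blast
  interpret rdat R cor Rp v
    by (unfold_locales) (use rd v in auto)
  have "Rp \<subseteq> Rp \<and> Rp \<subseteq> convex_cone hull Rp" by (simp add: hull_subset)
  then obtain D where D: "D \<subseteq> Rp \<and> Rp \<subseteq> convex_cone hull D"
    "\<forall>D'. D' \<subseteq> Rp \<and> Rp \<subseteq> convex_cone hull D' \<longrightarrow> card D \<le> card D'"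
    using ex_has_least_nat[of "\<lambda>D. D \<subseteq> Rp \<and> Rp \<subseteq> convex_cone hull D" Rp card] by blast
  interpret rsimp R cor Rp v D
    by (unfold_locales) (use D in auto)
  define c where "c = real d *\<^sub>R half_sum Rp + \<xi>"
  show ?thesis
  proof (rule set_eqI)
    fix z
    have lhs: "z \<in> V_xi d R Rp cor \<xi> \<longleftrightarrow>
      (\<forall>l\<in>int_pts. \<forall>f g. (f, g) \<in> W \<longrightarrow> g l \<in> antidom_lattice Rp \<longrightarrow> c \<bullet> g l \<le> (z + c) \<bullet> l)"
    proof -
      have iff: "(f, g) \<in> W \<Longrightarrow> (val_gamma d Rp \<xi> (f, g) l \<le> z \<bullet> l) = (c \<bullet> g l \<le> (z + c) \<bullet> l)" for f g l
        using val_gamma_eq[of f g d \<xi> l] unfolding c_def by (simp add: inner_add_left diff_le_eq)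
      show ?thesis unfolding V_xi_def mem_Collect_eq Ball_def split_paired_All
        by (simp add: iff)
    qed
    have rhs: "root_le Rp (dom_pt R Rp cor (z + real d *\<^sub>R half_sum Rp + \<xi>)) (real d *\<^sub>R half_sum Rp + \<xi>)
      \<longleftrightarrow> c - dom_pt R Rp cor (z + c) \<in> K"
    proof -
      have e: "z + real d *\<^sub>R half_sum Rp + \<xi> = z + c" unfolding c_def by (simp add: add.assoc)
      show ?thesis unfolding root_le_def cone_hull_finite[OF finRp] e c_def[symmetric] by simp
    qed
    show "z \<in> V_xi d R Rp cor \<xi> \<longleftrightarrow> z \<in> {z. root_le Rp (dom_pt R Rp cor (z + real d *\<^sub>R half_sum Rp + \<xi>))
                   (real d *\<^sub>R half_sum Rp + \<xi>)}"
      using lhs rhs char[OF rd(2) rd(3), of c "z + c"] by simp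
  qed
qed



end
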